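(* Let $c\ge\lfloor n/2\rfloor$ and $\mathbf{s}_n\in\mathcal{B}(n,c,d_1)$ with $add(\mathbf{s}_n)=t_1$. Suppose that for some integer $h$ with $1\le h\le n-1$, the shifted sequence $R^{h}(\mathbf{s}_n)$ belongs to $\mathcal{B}(n,c,d_2)$ with $add(R^{h}(\mathbf{s}_n))=t_2$. Let $b=h-(n-c-d_1)$. Then $t_1\le b<d_1+d_2-t_2$.
   Context: All sequences are binary (entries in $\mathbb{Z}_2$), $\overline{x}=x\oplus1$, $x\bmod d$ is the least nonnegative residue, and $\mathbf{a}^q$ is the concatenation of $q$ copies of $\mathbf a$. For $\mathbf{s}_n=(s_0,\dots,s_{n-1})$, $\mathbf{s}_j=(s_0,\dots,s_{j-1})$. A length-$m$ sequence is periodic if it is the concatenation of $m/e$ copies of a length-$e$ sequence for a proper divisor $e$ of $m$, aperiodic otherwise. Right circular shift: $R^k(\mathbf{s}_n)=(s_{n-k},\dots,s_{n-1},s_0,\dots,s_{n-k-1})$. For $c\ge\lfloor n/2\rfloor$ and $1\le d\le\min\{n-c,\lfloor n/2\rfloor\}$, $\mathcal{B}(n,c,d)$ is the set of aperiodic length-$n$ sequences $\mathbf{s}_n$ with $\mathbf{s}_d$ aperiodic and $\mathbf{s}_{c+d}=(s_0,\dots,s_{d-1})^q(s_0,\dots,s_{r-1},\overline{s_r})$, where $q=\lfloor(c+d-1)/d\rfloor$, $r=c+d-1-qd$, and $s_{c+d},\dots,s_{n-1}$ are arbitrary. For $\mathbf{s}_n\in\mathcal{B}(n,c,d)$, $add(\mathbf{s}_n)$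 is the integer $t\ge0$ such that $s_{n-1-i}=s_{(d-1-i)\bmod d}$ for $0\le i<t$ and $s_{n-1-t}\neq s_{(d-1-t)\bmod d}$. *)

theory Defs
  imports Main
begin

text \<open>Binary sequences are bool lists; entry x of Z_2 is rendered as a bool,
  and the complement of x is Not x.  The length-n sequence s has entries s ! i.\<close>

definition periodic :: "bool list \<Rightarrow> bool" where
  "periodic s \<longleftrightarrow> (\<exists>e. 0 < e \<and> e < length s \<and> e dvd length s \<and>
       s = concat (replicate (length s div e) (take e s)))"

definition aperiodic :: "bool list \<Rightarrow> bool" where
  "aperiodic s \<longleftrightarrow> \<not> periodic s"

definition B :: "nat \<Rightarrow> nat \<Rightarrow> nat \<Rightarrow> bool list set" where
  "B n c d = {s. c \<ge> n div 2 \<and> 1 \<le> d \<and> d \<le> min (n - c) (n div 2) \<and>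
      length s = n \<and> aperiodic s \<and> aperiodic (take d s) \<and>
      (let q = (c + d - 1) div d; r = c + d - 1 - q * d in
         take (c + d) s = concat (replicate q (take d s)) @ take r s @ [\<not> s ! r])}"

definition add :: "nat \<Rightarrow> bool list \<Rightarrow> nat" where
  "add d s = (THE t. t < length s \<and>
      (\<forall>i<t. s ! (length s - 1 - i) = s ! nat ((int d - 1 - int i) mod int d)) \<and>
      s ! (length s - 1 - t) \<noteq> s ! nat ((int d - 1 - int t) mod int d))"

definition rshift :: "nat \<Rightarrow> bool list \<Rightarrow> bool list" where
  "rshift k s = drop (length s - k) s @ take (length s - k) s"

end

theory Submission
  imports Defs
begin

definition per :: "(int \<Rightarrow> bool) \<Rightarrow> int \<Rightarrow> int \<Rightarrow> int \<Rightarrow> bool" where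
  "per F p lo hi \<longleftrightarrow> (\<forall>j. lo \<le> j \<and> j + p \<le> hi \<longrightarrow> F j = F (j + p))"

lemma per_iter:
  assumes "per F p lo hi" "lo \<le> i" "i + int k * p \<le> hi" "p \<ge> 0"
  shows "F i = F (i + int k * p)"
  using assms(3)
proof (induction k)
  case 0 then show ?case by simp
next
  case (Suc k)
  have a: "i + int k * p \<le> hi" using Suc.prems assms(4) by (simp add: algebra_simps)
  have "F (i + int k * p) = F (i + int k * p + p)"
  proof -
    have "0 \<le> int k * p" using assms(4) by simp
    then have "lo \<le> i + int k * p" using assms(2) by linarith
    moreover have "i + int k * p + p \<le> hi" using Suc.prems by (simp add: algebra_simps)
    ultimately show ?thesis using assms(1) unfolding per_def by blast
  qed
  then show ?case using Suc.IH[OF a] by (simp add: algebra_simps)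
qed

lemma per_reduce:
  assumes "per F p lo hi" "p > 0" "lo \<le> j" "j \<le> hi"
  shows "F j = F (lo + (j - lo) mod p)"
proof -
  define k where "k = nat ((j - lo) div p)"
  have "0 \<le> (j - lo) div p" using assms by (simp add: div_int_pos_iff)
  then have k: "int k = (j - lo) div p" by (simp add: k_def)
  have e: "j = lo + (j - lo) mod p + int k * p" using k by (simp add: algebra_simps)
  have "F (lo + (j - lo) mod p) = F (lo + (j - lo) mod p + int k * p)"
    apply (rule per_iter[OF assms(1)])
    using assms e by auto
  then show ?thesis using e by simp
qed

lemma per_eqv:
  assumes "per F p lo hi" "p > 0" "lo \<le> i" "i \<le> hi" "lo \<le> j" "j \<le> hi" "i mod p = j mod p"
  shows "F i = F j"
proof -
  have "(i - lo) mod p = (j - lo) mod p" using assms(7) by (metis mod_diff_cong)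
  then show ?thesis using per_reduce[OF assms(1,2,3,4)] per_reduce[OF assms(1,2,5,6)] by simp
qed

lemma per_mono: "per F p lo hi \<Longrightarrow> lo \<le> lo' \<Longrightarrow> hi' \<le> hi \<Longrightarrow> per F p lo' hi'"
  unfolding per_def by auto

lemma per_ext:
  assumes g: "per F g lo (hi - p)" and p: "per F p lo hi" "g > 0" "p > 0" "g dvd p" "hi - p - lo \<ge> p - 1"
  shows "per F g lo hi"
  unfolding per_def
proof (intro allI impI)
  fix j assume j: "lo \<le> j \<and> j + g \<le> hi"
  have 1: "F j = F (lo + (j - lo) mod p)" using per_reduce[OF p(1) p(3)] j p by auto
  have 2: "F (j + g) = F (lo + (j + g - lo) mod p)" using per_reduce[OF p(1) p(3)] j p by auto
  have m1: "(lo + (j - lo) mod p) mod g = j mod g"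
  proof -
    have "((j - lo) mod p) mod g = (j - lo) mod g" using assms(5) by (rule mod_mod_cancel)
    then have "(lo + (j - lo) mod p) mod g = (lo + (j - lo)) mod g" by (metis mod_add_right_eq)
    then show ?thesis by simp
  qed
  have m2: "(lo + (j + g - lo) mod p) mod g = j mod g"
  proof -
    have "((j + g - lo) mod p) mod g = (j + g - lo) mod g" using assms(5) by (rule mod_mod_cancel)
    then have "(lo + (j + g - lo) mod p) mod g = (lo + (j + g - lo)) mod g" by (metis mod_add_right_eq)
    then show ?thesis by simp
  qed
  have "F (lo + (j - lo) mod p) = F (lo + (j + g - lo) mod p)"
    apply (rule per_eqv[OF g p(2)])
  proof -
    have b1: "(j - lo) mod p < p" "0 \<le> (j - lo) mod p" "(j + g - lo) mod p < p" "0 \<le> (j + g - lo) mod p"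
      using p(3) by auto
    show "lo \<le> lo + (j - lo) mod p" using b1 by linarith
    show "lo + (j - lo) mod p \<le> hi - p" using b1 p(5) by linarith
    show "lo \<le> lo + (j + g - lo) mod p" using b1 by linarith
    show "lo + (j + g - lo) mod p \<le> hi - p" using b1 p(5) by linarith
    show "(lo + (j - lo) mod p) mod g = (lo + (j + g - lo) mod p) mod g" using m1 m2 by simp
  qed
  then show "F j = F (j + g)" using 1 2 by simp
qed

lemma FW_aux:
  "\<forall>p q lo hi. nat (p + q) = N \<longrightarrow> 0 < p \<longrightarrow> 0 < q \<longrightarrow> hi - lo \<ge> p + q - 2 \<longrightarrow>
     per F p lo hi \<longrightarrow> per F q lo hi \<longrightarrow> per F (gcd p q) lo hi"
proof (induction N rule: less_induct)
  case (less N)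
  show ?case
  proof (intro allI impI)
    fix p q lo hi :: int
    assume N: "nat (p + q) = N" and pq: "0 < p" "0 < q" and L: "hi - lo \<ge> p + q - 2"
      and Pp: "per F p lo hi" and Pq: "per F q lo hi"
    have step: "per F (gcd a b) lo hi" if ab: "a < b" "0 < a" "nat (a + b) = N" "hi - lo \<ge> a + b - 2"
        "per F a lo hi" "per F b lo hi" for a b
    proof -
      have 1: "per F (b - a) lo (hi - a)"
        unfolding per_def
      proof (intro allI impI)
        fix j assume j: "lo \<le> j \<and> j + (b - a) \<le> hi - a"
        have "F j = F (j + b)" using ab(6) j ab unfolding per_def by auto
        moreover have "F (j + b - a) = F (j + b - a + a)" using ab(5) j ab unfolding per_def by auto
        ultimately show "F j = F (j + (b - a))" by (simp add: algebra_simps)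
      qed
      have 2: "per F a lo (hi - a)" using per_mono[OF ab(5), of lo "hi - a"] ab by simp
      have "per F (gcd a (b - a)) lo (hi - a)"
      proof -
        have lt: "nat b < N" using ab by auto
        have "\<forall>p q lo hi. nat (p + q) = nat b \<longrightarrow> 0 < p \<longrightarrow> 0 < q \<longrightarrow> hi - lo \<ge> p + q - 2 \<longrightarrow>
          per F p lo hi \<longrightarrow> per F q lo hi \<longrightarrow> per F (gcd p q) lo hi" using less.IH[OF lt] .
        then have "nat (a + (b - a)) = nat b \<longrightarrow> 0 < a \<longrightarrow> 0 < b - a \<longrightarrow> (hi - a) - lo \<ge> a + (b - a) - 2 \<longrightarrow>
          per F a lo (hi - a) \<longrightarrow> per F (b - a) lo (hi - a) \<longrightarrow> per F (gcd a (b - a)) lo (hi - a)" by blast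
        then show ?thesis using 1 2 ab by auto
      qed
      moreover have "gcd a (b - a) = gcd a b"
      proof -
        have "gcd a (b - a) = gcd (b - a) a" by (rule gcd.commute)
        also have "\<dots> = gcd b a" by (rule gcd_diff1)
        also have "\<dots> = gcd a b" by (rule gcd.commute)
        finally show ?thesis .
      qed
      ultimately have g: "per F (gcd a b) lo (hi - a)" by simp
      show ?thesis
        apply (rule per_ext[OF g ab(5)])
        using ab by auto
    qed
    show "per F (gcd p q) lo hi"
    proof (cases "p = q")
      case True then show ?thesis using Pp pq by simp
    next
      case False
      then consider "p < q" | "q < p" by linarith
      then show ?thesis
      proof cases
        case 1 then show ?thesis using step[of p q] pq N L Pp Pq by auto
      next
        case 2 then show ?thesis using step[of q p] pq N L Pp Pq by (auto simp: gcd.commute add.commute)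
      qed
    qed
  qed
qed

lemma FW:
  fixes p q :: int
  assumes "0 < p" "0 < q" "hi - lo \<ge> p + q - 2" "per F p lo hi" "per F q lo hi"
  shows "per F (gcd p q) lo hi"
  using FW_aux[rule_format, OF refl] assms by blast

definition cyc :: "bool list \<Rightarrow> int \<Rightarrow> bool" where
  "cyc s j = s ! nat (j mod int (length s))"

lemma concat_rep_nth: "i < k * length v \<Longrightarrow> concat (replicate k v) ! i = v ! (i mod length v)"
proof (induction k arbitrary: i)
  case 0 then show ?case by simp
next
  case (Suc k)
  show ?case
  proof (cases "i < length v")
    case True then show ?thesis by (simp add: nth_append)
  next
    case False
    then have "concat (replicate (Suc k) v) ! i = concat (replicate k v) ! (i - length v)"
      by (simp add: nth_append)
    also have "\<dots> = v ! ((i - length v) mod length v)" using Suc False by (intro Suc.IH) auto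
    also have "(i - length v) mod length v = i mod length v" using False by (simp add: le_mod_geq)
    finally show ?thesis .
  qed
qed

lemma B_basic:
  assumes "s \<in> B n c d"
  shows "length s = n" "n div 2 \<le> c" "1 \<le> d" "d \<le> n - c" "d \<le> n div 2" "aperiodic (take d s)"
  using assms unfolding B_def by auto

lemma B_pre:
  assumes "s \<in> B n c d"
  shows "\<forall>j<c+d-1. s!j = s!(j mod d)" "s!(c+d-1) = (\<not> s!((c+d-1) mod d))"
proof -
  define q where "q = (c + d - 1) div d"
  define r where "r = c + d - 1 - q * d"
  have bs: "length s = n" "n div 2 \<le> c" "1 \<le> d" "d \<le> n - c" "d \<le> n div 2"
    using B_basic[OF assms] by auto
  have c1: "1 \<le> c" using bs by linarith
  have cd: "c + d \<le> n" using bs by linarith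
  have eq: "take (c + d) s = concat (replicate q (take d s)) @ take r s @ [\<not> s ! r]"
    using assms unfolding B_def Let_def q_def r_def by auto
  have rr: "r = (c + d - 1) mod d" unfolding r_def q_def by (simp add: minus_div_mult_eq_mod)
  have qr: "q * d + r = c + d - 1" unfolding rr q_def by simp
  have rd: "r < d" unfolding rr using bs by simp
  have ltd: "length (take d s) = d" using bs cd by simp
  have lc: "length (concat (replicate q (take d s))) = q * d" using ltd by (induction q) auto
  show "\<forall>j<c+d-1. s!j = s!(j mod d)"
  proof (intro allI impI)
    fix j assume j: "j < c + d - 1"
    have "s ! j = take (c + d) s ! j" using j by simp
    also have "\<dots> = (concat (replicate q (take d s)) @ take r s @ [\<not> s ! r]) ! j" using eq by simp
    also have "\<dots> = s ! (j mod d)"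
    proof (cases "j < q * d")
      case True
      then have "(concat (replicate q (take d s)) @ take r s @ [\<not> s ! r]) ! j
          = concat (replicate q (take d s)) ! j" using lc by (simp add: nth_append)
      also have "\<dots> = take d s ! (j mod length (take d s))"
        using True bs cd by (intro concat_rep_nth) simp
      also have "\<dots> = s ! (j mod d)" using bs cd by simp
      finally show ?thesis .
    next
      case False
      then have jr: "j - q * d < r" using j qr by linarith
      have "(concat (replicate q (take d s)) @ take r s @ [\<not> s ! r]) ! j = (take r s @ [\<not> s ! r]) ! (j - q * d)"
        using lc False by (simp add: nth_append)
      also have "\<dots> = s ! (j - q * d)" using jr rd bs cd by (simp add: nth_append)
      also have "j - q * d = j mod d"
      proof -
        have "j = q * d + (j - q * d)" using False by simp
        then have "j mod d = (j - q * d) mod d" by (metis mod_mult_self3 mult.commute)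
        then show ?thesis using jr rd by simp
      qed
      finally show ?thesis .
    qed
    finally show "s!j = s!(j mod d)" .
  qed
  have "s ! (c + d - 1) = take (c + d) s ! (q * d + r)" using qr c1 by simp
  also have "\<dots> = (\<not> s ! r)" using eq lc rd bs cd by (simp add: nth_append)
  finally show "s!(c+d-1) = (\<not> s!((c+d-1) mod d))" using rr by simp
qed


definition mt :: "nat \<Rightarrow> bool list \<Rightarrow> nat \<Rightarrow> bool" where
  "mt d s i \<longleftrightarrow> s ! (length s - 1 - i) = s ! nat ((int d - 1 - int i) mod int d)"

lemma cyc_period: "length s = n \<Longrightarrow> cyc s (j + int n) = cyc s j"
  unfolding cyc_def by simp

lemma conv:
  assumes "s \<in> B n c d" "T \<le> n" "\<forall>i<T. mt d s i"
  shows "\<forall>j. - int T \<le> j \<and> j \<le> int c + int d - 2 \<longrightarrow> cyc s j = s ! nat (j mod int d)"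
proof (intro allI impI)
  fix j assume j: "- int T \<le> j \<and> j \<le> int c + int d - 2"
  have bs: "length s = n" "n div 2 \<le> c" "1 \<le> d" "d \<le> n - c" "d \<le> n div 2"
    using B_basic[OF assms(1)] by auto
  have cd: "c + d \<le> n" "1 \<le> c" using bs by linarith+
  show "cyc s j = s ! nat (j mod int d)"
  proof (cases "0 \<le> j")
    case True
    have jn: "j < int n" using j cd by linarith
    have "cyc s j = s ! nat j" unfolding cyc_def using True jn bs by simp
    also have "\<dots> = s ! (nat j mod d)" using B_pre(1)[OF assms(1)] j cd True by auto
    also have "nat j mod d = nat (j mod int d)" using True by (simp add: nat_mod_distrib)
    finally show ?thesis .
  next
    case False
    define i where "i = nat (-1 - j)"
    have i: "int i = -1 - j" "i < T" using False j unfolding i_def by auto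
    have "j mod int n = j + int n"
    proof -
      have "0 \<le> j + int n" "j + int n < int n" using False j assms(2) by linarith+
      then have "(j + int n) mod int n = j + int n" by (rule mod_pos_pos_trivial)
      then show ?thesis using mod_add_self2[of j "int n"] by simp
    qed
    moreover have "j + int n = int (n - 1 - i)" using i assms(2) by (simp add: of_nat_diff)
    ultimately have "cyc s j = s ! (n - 1 - i)" unfolding cyc_def using bs by simp
    also have "\<dots> = s ! nat ((int d - 1 - int i) mod int d)" using assms(3) i bs unfolding mt_def by auto
    also have "(int d - 1 - int i) mod int d = j mod int d"
    proof -
      have "int d - 1 - int i = j + int d" using i by simp
      then show ?thesis by (metis mod_add_self2)
    qed
    finally show ?thesis .
  qed
qed

lemma no_full_match:
  assumes "s \<in> B n c d"
  shows "\<exists>t<n. \<not> mt d s t"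
proof (rule ccontr)
  assume "\<not> ?thesis"
  then have all: "\<forall>i<n. mt d s i" by auto
  have bs: "length s = n" "n div 2 \<le> c" "1 \<le> d" "d \<le> n - c" "d \<le> n div 2"
    using B_basic[OF assms(1)] by auto
  have cd: "c + d \<le> n" "1 \<le> c" using bs by linarith+
  have cv: "\<forall>j. - int n \<le> j \<and> j \<le> int c + int d - 2 \<longrightarrow> cyc s j = s ! nat (j mod int d)"
    using conv[OF assms(1) le_refl all] .
  have p1: "per (cyc s) (int d) (- int n) (int c + int d - 2)"
    unfolding per_def
  proof (intro allI impI)
    fix j assume "- int n \<le> j \<and> j + int d \<le> int c + int d - 2"
    then show "cyc s j = cyc s (j + int d)" using cv bs by auto
  qed
  have p2: "per (cyc s) (int n) (- int n) (int c + int d - 2)"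
    unfolding per_def using cyc_period[OF bs(1)] by auto
  have g: "per (cyc s) (gcd (int d) (int n)) (- int n) (int c + int d - 2)"
    apply (rule FW[OF _ _ _ p1 p2]) using bs cd by auto
  have "cyc s (int c - 1) = cyc s (int c - 1 + int d - int n)"
  proof (rule per_eqv[OF g])
    show "0 < gcd (int d) (int n)" using bs by simp
    define G where "G = gcd (int d) (int n)"
    obtain a where a: "int d = G * a" unfolding G_def by (metis gcd_dvd1 dvdE)
    obtain b where b: "int n = G * b" unfolding G_def by (metis gcd_dvd2 dvdE)
    have e: "int c - 1 + int d - int n = (int c - 1) + G * (a - b)"
      using a b by (simp add: algebra_simps)
    have h: "((int c - 1) + G * (a - b)) mod G = (int c - 1) mod G" by simp
    have "(int c - 1) mod G = (int c - 1 + int d - int n) mod G" by (subst e) (rule h[symmetric])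
    then show "(int c - 1) mod gcd (int d) (int n) = (int c - 1 + int d - int n) mod gcd (int d) (int n)"
      unfolding G_def .
  qed (use cd bs in auto)
  moreover have "cyc s (int c - 1 + int d - int n) = cyc s (int c - 1 + int d)"
    using cyc_period[OF bs(1), of "int c - 1 + int d - int n"] by simp
  ultimately have "cyc s (int c - 1) = cyc s (int c - 1 + int d)" by simp
  moreover have "cyc s (int c - 1) = s ! nat ((int c - 1) mod int d)" using cv[rule_format, of "int c - 1"] cd bs by auto
  moreover have "cyc s (int c - 1 + int d) = s ! (c + d - 1)"
  proof -
    have e: "int c - 1 + int d = int (c + d - 1)" using cd by (simp add: of_nat_diff)
    have m: "int (c + d - 1) mod int n = int (c + d - 1)"
      using cd by (metis of_nat_mod mod_less add_lessD1 le_add_diff_inverse2 less_add_one less_le_trans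
          Suc_le_lessD diff_Suc_less add_gr_0 less_numeral_extra(1) linorder_not_le)
    show ?thesis unfolding cyc_def bs(1) e m nat_int by (rule refl)
  qed
  moreover have "nat ((int c - 1) mod int d) = (c + d - 1) mod d"
  proof -
    have e: "int (c + d - 1) = (int c - 1) + int d" using cd by (simp add: of_nat_diff)
    have "(int c - 1) mod int d = (int (c + d - 1)) mod int d" unfolding e by simp
    then show ?thesis by (simp add: nat_mod_distrib)
  qed
  ultimately show False using B_pre(2)[OF assms(1)] by simp
qed

lemma add_spec:
  assumes "s \<in> B n c d"
  shows "add d s < n" "\<forall>i<add d s. mt d s i"
proof -
  have bs: "length s = n" using B_basic[OF assms(1)] by auto
  define t0 where "t0 = (LEAST t. \<not> mt d s t)"
  obtain t where t: "t < n" "\<not> mt d s t" using no_full_match[OF assms] by auto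
  have t0: "\<not> mt d s t0" "t0 \<le> t" unfolding t0_def
    by (rule LeastI[of _ t], rule t(2)) (rule Least_le, rule t(2))
  have t0b: "\<forall>i<t0. mt d s i" unfolding t0_def using not_less_Least by blast
  have P: "t0 < length s \<and> (\<forall>i<t0. mt d s i) \<and> \<not> mt d s t0" using t0 t0b t bs by auto
  have "add d s = t0"
    unfolding add_def
  proof (rule the_equality)
    show "t0 < length s \<and> (\<forall>i<t0. s ! (length s - 1 - i) = s ! nat ((int d - 1 - int i) mod int d)) \<and>
      s ! (length s - 1 - t0) \<noteq> s ! nat ((int d - 1 - int t0) mod int d)" using P unfolding mt_def by auto
  next
    fix t' assume h: "t' < length s \<and> (\<forall>i<t'. s ! (length s - 1 - i) = s ! nat ((int d - 1 - int i) mod int d)) \<and>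
      s ! (length s - 1 - t') \<noteq> s ! nat ((int d - 1 - int t') mod int d)"
    then have h': "(\<forall>i<t'. mt d s i) \<and> \<not> mt d s t'" unfolding mt_def by auto
    show "t' = t0"
    proof (rule ccontr)
      assume "t' \<noteq> t0"
      then consider "t' < t0" | "t0 < t'" by linarith
      then show False using h' P by cases auto
    qed
  qed
  then show "add d s < n" "\<forall>i<add d s. mt d s i" using P bs by auto
qed

lemma window:
  assumes g: "per F g lo hi" "0 < g" "g dvd d" "0 < d" "hi - lo \<ge> d - 1"
    and H: "\<And>j. lo \<le> j \<Longrightarrow> j \<le> hi \<Longrightarrow> F j = U ((j - \<tau>) mod d)"
    and m: "0 \<le> m" "m < d"
  shows "U m = U (m mod g)"
proof -
  define j1 where "j1 = lo + (m + \<tau> - lo) mod d"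
  define j2 where "j2 = lo + (m mod g + \<tau> - lo) mod d"
  have b: "0 \<le> (m + \<tau> - lo) mod d" "(m + \<tau> - lo) mod d < d"
    "0 \<le> (m mod g + \<tau> - lo) mod d" "(m mod g + \<tau> - lo) mod d < d" using g(4) by auto
  have r1: "lo \<le> j1" "j1 \<le> hi" "lo \<le> j2" "j2 \<le> hi" using b g(5) unfolding j1_def j2_def by linarith+
  have gd: "g \<le> d" using g by (simp add: zdvd_imp_le)
  have mg: "0 \<le> m mod g" "m mod g < d" using g gd
    by (simp, meson less_le_trans pos_mod_bound)
  have e1: "(j1 - \<tau>) mod d = m"
  proof -
    have "j1 - \<tau> = (m + \<tau> - lo) mod d - (\<tau> - lo)" unfolding j1_def by simp
    then have "(j1 - \<tau>) mod d = ((m + \<tau> - lo) - (\<tau> - lo)) mod d" by (metis mod_diff_left_eq)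
    then show ?thesis using m by simp
  qed
  have e2: "(j2 - \<tau>) mod d = m mod g"
  proof -
    have "j2 - \<tau> = (m mod g + \<tau> - lo) mod d - (\<tau> - lo)" unfolding j2_def by simp
    then have "(j2 - \<tau>) mod d = ((m mod g + \<tau> - lo) - (\<tau> - lo)) mod d" by (metis mod_diff_left_eq)
    then show ?thesis using mg by simp
  qed
  have "(j1 - \<tau>) mod g = (j2 - \<tau>) mod g"
  proof -
    have "(j1 - \<tau>) mod g = ((j1 - \<tau>) mod d) mod g" using g(3) by (simp add: mod_mod_cancel)
    also have "\<dots> = m mod g" using e1 by simp
    also have "\<dots> = ((j2 - \<tau>) mod d) mod g" using e2 by simp
    also have "\<dots> = (j2 - \<tau>) mod g" using g(3) by (simp add: mod_mod_cancel)
    finally show ?thesis .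
  qed
  then have "j1 mod g = j2 mod g" by (metis diff_add_cancel mod_add_left_eq)
  then have "F j1 = F j2" using per_eqv[OF g(1,2)] r1 by blast
  then show ?thesis using H[OF r1(1,2)] H[OF r1(3,4)] e1 e2 by simp
qed

lemma core:
  fixes F U1 U2 :: "int \<Rightarrow> bool" and d1 d2 a1 b1 a2 b2 \<sigma> :: int
  assumes d: "0 < d1" "0 < d2"
    and HA: "\<And>j. a1 \<le> j \<Longrightarrow> j \<le> b1 \<Longrightarrow> F j = U1 (j mod d1)"
    and HB: "\<And>j. a2 \<le> j \<Longrightarrow> j \<le> b2 \<Longrightarrow> F j = U2 ((j - \<sigma>) mod d2)"
    and P1: "\<And>g. 0 < g \<Longrightarrow> g < d1 \<Longrightarrow> g dvd d1 \<Longrightarrow> \<not> (\<forall>m. 0 \<le> m \<and> m < d1 \<longrightarrow> U1 m = U1 (m mod g))"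
    and P2: "\<And>g. 0 < g \<Longrightarrow> g < d2 \<Longrightarrow> g dvd d2 \<Longrightarrow> \<not> (\<forall>m. 0 \<le> m \<and> m < d2 \<longrightarrow> U2 m = U2 (m mod g))"
    and ov: "min b1 b2 - max a1 a2 \<ge> d1 + d2 - 2"
  shows "d1 = d2"
proof -
  define lo where "lo = max a1 a2"
  define hi where "hi = min b1 b2"
  have L: "hi - lo \<ge> d1 + d2 - 2" using ov unfolding lo_def hi_def .
  have HA': "\<And>j. lo \<le> j \<Longrightarrow> j \<le> hi \<Longrightarrow> F j = U1 ((j - 0) mod d1)" using HA unfolding lo_def hi_def by simp
  have HB': "\<And>j. lo \<le> j \<Longrightarrow> j \<le> hi \<Longrightarrow> F j = U2 ((j - \<sigma>) mod d2)" using HB unfolding lo_def hi_def by simp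
  have p1: "per F d1 lo hi" unfolding per_def
  proof (intro allI impI)
    fix j assume j: "lo \<le> j \<and> j + d1 \<le> hi"
    then show "F j = F (j + d1)" using HA'[of j] HA'[of "j + d1"] d by simp
  qed
  have p2: "per F d2 lo hi" unfolding per_def
  proof (intro allI impI)
    fix j assume j: "lo \<le> j \<and> j + d2 \<le> hi"
    have "(j + d2 - \<sigma>) mod d2 = (j - \<sigma>) mod d2"
      by (metis add.commute add_diff_eq mod_add_self1)
    then show "F j = F (j + d2)" using HB'[of j] HB'[of "j + d2"] d j by simp
  qed
  define g where "g = gcd d1 d2"
  have pg: "per F g lo hi" unfolding g_def using FW[OF d L p1 p2] .
  have g0: "0 < g" unfolding g_def using d by simp
  have gd1: "g dvd d1" "g dvd d2" unfolding g_def by auto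
  have "g = d1"
  proof (rule ccontr)
    assume ne: "g \<noteq> d1"
    have "g \<le> d1" using gd1 d by (simp add: zdvd_imp_le)
    then have "g < d1" using ne by simp
    moreover have "\<forall>m. 0 \<le> m \<and> m < d1 \<longrightarrow> U1 m = U1 (m mod g)"
      using window[OF pg g0 gd1(1) d(1) _ HA'] L d by auto
    ultimately show False using P1[OF g0 _ gd1(1)] by blast
  qed
  moreover have "g = d2"
  proof (rule ccontr)
    assume ne: "g \<noteq> d2"
    have "g \<le> d2" using gd1 d by (simp add: zdvd_imp_le)
    then have "g < d2" using ne by simp
    moreover have "\<forall>m. 0 \<le> m \<and> m < d2 \<longrightarrow> U2 m = U2 (m mod g)"
      using window[OF pg g0 gd1(2) d(2) _ HB'] L d by auto
    ultimately show False using P2[OF g0 _ gd1(2)] by blast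
  qed
  ultimately show ?thesis by simp
qed

lemma sep:
  fixes F U1 U2 :: "int \<Rightarrow> bool" and d1 d2 a1 a2 c \<sigma> :: int
  assumes d: "0 < d1" "0 < d2"
    and HA: "\<And>j. a1 \<le> j \<Longrightarrow> j \<le> c + d1 - 2 \<Longrightarrow> F j = U1 (j mod d1)"
    and HB: "\<And>j. a2 \<le> j \<Longrightarrow> j \<le> \<sigma> + c + d2 - 2 \<Longrightarrow> F j = U2 ((j - \<sigma>) mod d2)"
    and BA: "F (c - 1) \<noteq> F (c + d1 - 1)"
    and BB: "F (\<sigma> + c - 1) \<noteq> F (\<sigma> + c + d2 - 1)"
    and P1: "\<And>g. 0 < g \<Longrightarrow> g < d1 \<Longrightarrow> g dvd d1 \<Longrightarrow> \<not> (\<forall>m. 0 \<le> m \<and> m < d1 \<longrightarrow> U1 m = U1 (m mod g))"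
    and P2: "\<And>g. 0 < g \<Longrightarrow> g < d2 \<Longrightarrow> g dvd d2 \<Longrightarrow> \<not> (\<forall>m. 0 \<le> m \<and> m < d2 \<longrightarrow> U2 m = U2 (m mod g))"
    and ov: "min (c + d1 - 2) (\<sigma> + c + d2 - 2) - max a1 a2 \<ge> d1 + d2 - 2"
  shows "\<sigma> = 0"
proof -
  have eq: "d1 = d2" by (rule core[OF d HA HB P1 P2 ov])
  show ?thesis
  proof (rule ccontr)
    assume ne: "\<sigma> \<noteq> 0"
    then consider "\<sigma> > 0" | "\<sigma> < 0" by linarith
    then show False
    proof cases
      case 1
      have i1: "a2 \<le> c - 1" "c - 1 \<le> \<sigma> + c + d2 - 2" "a2 \<le> c + d1 - 1" "c + d1 - 1 \<le> \<sigma> + c + d2 - 2"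
        using ov eq 1 d by auto
      have ee: "c + d1 - 1 - \<sigma> = (c - 1 - \<sigma>) + d2" using eq by simp
      have "(c + d1 - 1 - \<sigma>) mod d2 = (c - 1 - \<sigma>) mod d2" unfolding ee by (rule mod_add_self2)
      then show False using HB[OF i1(1,2)] HB[OF i1(3,4)] BA by simp
    next
      case 2
      have i1: "a1 \<le> \<sigma> + c - 1" "\<sigma> + c - 1 \<le> c + d1 - 2" "a1 \<le> \<sigma> + c + d2 - 1" "\<sigma> + c + d2 - 1 \<le> c + d1 - 2"
        using ov eq 2 d by auto
      have ee: "\<sigma> + c + d2 - 1 = (\<sigma> + c - 1) + d1" using eq by simp
      have "(\<sigma> + c + d2 - 1) mod d1 = (\<sigma> + c - 1) mod d1" unfolding ee by (rule mod_add_self2)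
      then show False using HA[OF i1(1,2)] HA[OF i1(3,4)] BB by simp
    qed
  qed
qed

lemma len_concat_rep: "length (concat (replicate k v)) = k * length v"
  by (induction k) auto

lemma prim:
  assumes "s \<in> B n c d" "0 < g" "g < int d" "g dvd int d"
  shows "\<not> (\<forall>m. 0 \<le> m \<and> m < int d \<longrightarrow> s ! nat m = s ! nat (m mod g))"
proof
  assume H: "\<forall>m. 0 \<le> m \<and> m < int d \<longrightarrow> s ! nat m = s ! nat (m mod g)"
  have bs: "length s = n" "n div 2 \<le> c" "1 \<le> d" "d \<le> n - c" "d \<le> n div 2" "aperiodic (take d s)"
    using B_basic[OF assms(1)] by auto
  define e where "e = nat g"
  have e4: "int e = g" using assms(2) by (simp add: e_def)
  have "int e dvd int d" using assms(4) e4 by simp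
  then have ed: "e dvd d" by simp
  have e: "0 < e" "e < d" "e dvd d" "int e = g"
    using assms(2,3) e4 ed by (simp_all add: e_def)
  have ld: "length (take d s) = d" using bs by simp
  have eq: "take d s = concat (replicate (d div e) (take e (take d s)))"
  proof (rule nth_equalityI)
    show "length (take d s) = length (concat (replicate (d div e) (take e (take d s))))"
      using ld e by (simp add: len_concat_rep)
  next
    fix i assume i: "i < length (take d s)"
    have lt: "length (take e (take d s)) = e" using ld e by simp
    have "concat (replicate (d div e) (take e (take d s))) ! i = take e (take d s) ! (i mod e)"
      using concat_rep_nth[of i "d div e" "take e (take d s)"] i ld e lt by simp
    also have "\<dots> = s ! (i mod e)" using e ld
      by (metis mod_less_divisor nth_take order.strict_trans)
    also have "\<dots> = s ! i"
    proof -
      have "s ! nat (int i) = s ! nat (int i mod g)" using H[rule_format, of "int i"] i ld by simp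
      moreover have "nat (int i mod g) = i mod e" using e by (metis nat_int of_nat_mod)
      ultimately show ?thesis by simp
    qed
    also have "\<dots> = take d s ! i" using i ld by simp
    finally show "take d s ! i = concat (replicate (d div e) (take e (take d s))) ! i" by simp
  qed
  have "0 < e \<and> e < length (take d s) \<and> e dvd length (take d s) \<and>
     take d s = concat (replicate (length (take d s) div e) (take e (take d s)))"
    unfolding ld using e eq by blast
  then have "periodic (take d s)" unfolding periodic_def by blast
  then show False using bs(6) unfolding aperiodic_def by simp
qed

lemma run:
  assumes "s \<in> B n c d"
  shows "\<And>j. - int (add d s) \<le> j \<Longrightarrow> j \<le> int c + int d - 2 \<Longrightarrow> cyc s j = s ! nat (j mod int d)"
    and "cyc s (int c - 1) \<noteq> cyc s (int c + int d - 1)"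
proof -
  show "\<And>j. - int (add d s) \<le> j \<Longrightarrow> j \<le> int c + int d - 2 \<Longrightarrow> cyc s j = s ! nat (j mod int d)"
    using conv[OF assms _ add_spec(2)[OF assms]] add_spec(1)[OF assms] by auto
  have bs: "length s = n" "n div 2 \<le> c" "1 \<le> d" "d \<le> n - c" "d \<le> n div 2"
    using B_basic[OF assms(1)] by auto
  have cd: "c + d \<le> n" "1 \<le> c" using bs by linarith+
  have cv: "\<forall>j. - int 0 \<le> j \<and> j \<le> int c + int d - 2 \<longrightarrow> cyc s j = s ! nat (j mod int d)"
    using conv[OF assms(1), of 0] by simp
  have "cyc s (int c - 1) = s ! nat ((int c - 1) mod int d)" using cv[rule_format, of "int c - 1"] cd bs by auto
  moreover have "cyc s (int c + int d - 1) = s ! (c + d - 1)"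
  proof -
    have e: "int c + int d - 1 = int (c + d - 1)" using cd by (simp add: of_nat_diff)
    have m: "int (c + d - 1) mod int n = int (c + d - 1)"
      using cd by (metis of_nat_mod mod_less add_lessD1 le_add_diff_inverse2 less_add_one less_le_trans
          Suc_le_lessD diff_Suc_less add_gr_0 less_numeral_extra(1) linorder_not_le)
    show ?thesis unfolding cyc_def bs(1) e m nat_int by (rule refl)
  qed
  moreover have "nat ((int c - 1) mod int d) = (c + d - 1) mod d"
  proof -
    have e: "int (c + d - 1) = (int c - 1) + int d" using cd by (simp add: of_nat_diff)
    have "(int c - 1) mod int d = (int (c + d - 1)) mod int d" unfolding e by simp
    then show ?thesis by (simp add: nat_mod_distrib)
  qed
  ultimately show "cyc s (int c - 1) \<noteq> cyc s (int c + int d - 1)" using B_pre(2)[OF assms(1)] by simp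
qed

lemma cyc_rshift:
  assumes "length s = n" "1 \<le> h" "h \<le> n - 1"
  shows "cyc (rshift h s) j = cyc s (j - int h)"
proof -
  have lr: "length (rshift h s) = n" unfolding rshift_def using assms by simp
  define m where "m = j mod int n"
  have n0: "0 < n" using assms by linarith
  have m: "0 \<le> m" "m < int n" unfolding m_def using n0 by auto
  define k where "k = nat m"
  have k: "int k = m" "k < n" unfolding k_def using m by auto
  have jm: "(j - int h) mod int n = (m - int h) mod int n" unfolding m_def by (simp add: mod_diff_left_eq)
  have ld: "length (drop (n - h) s) = h" using assms by simp
  show ?thesis
  proof (cases "k < h")
    case True
    have "cyc (rshift h s) j = (drop (n - h) s @ take (n - h) s) ! k"
      unfolding cyc_def lr by (simp add: rshift_def assms(1) k_def m_def)
    also have "\<dots> = s ! (n - h + k)" using True ld assms by (simp add: nth_append)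
    also have "n - h + k = nat ((j - int h) mod int n)"
    proof -
      have "(m - int h) mod int n = m - int h + int n"
      proof -
        have "0 \<le> m - int h + int n" "m - int h + int n < int n" using True k m assms by linarith+
        then have "(m - int h + int n) mod int n = m - int h + int n" by (rule mod_pos_pos_trivial)
        then show ?thesis using mod_add_self2[of "m - int h" "int n"] by simp
      qed
      then show ?thesis using jm k True assms by simp
    qed
    finally show ?thesis unfolding cyc_def assms(1) .
  next
    case False
    have "cyc (rshift h s) j = (drop (n - h) s @ take (n - h) s) ! k"
      unfolding cyc_def lr by (simp add: rshift_def assms(1) k_def m_def)
    also have "\<dots> = s ! (k - h)" using False ld assms k by (simp add: nth_append)
    also have "k - h = nat ((j - int h) mod int n)"
    proof -
      have "(m - int h) mod int n = m - int h"
        using False k m assms by (simp add: mod_pos_pos_trivial)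
      then show ?thesis using jm k False assms by simp
    qed
    finally show ?thesis unfolding cyc_def assms(1) .
  qed
qed

lemma cyc_per_k: "length s = n \<Longrightarrow> cyc s (j + k * int n) = cyc s j"
  unfolding cyc_def by simp

lemma minmax: "(x::int) \<le> a1 - c1 \<Longrightarrow> x \<le> a1 - c2 \<Longrightarrow> x \<le> a2 - c1 \<Longrightarrow> x \<le> a2 - c2 \<Longrightarrow> x \<le> min a1 a2 - max c1 c2"
  by (simp add: min_def max_def)

theorem lemma6:
  fixes n c d1 d2 h t1 t2 :: nat and s :: "bool list"
  assumes "c \<ge> n div 2"
    and "s \<in> B n c d1" and "add d1 s = t1"
    and "1 \<le> h" and "h \<le> n - 1"
    and "rshift h s \<in> B n c d2" and "add d2 (rshift h s) = t2"
  shows "int t1 \<le> int h - (int n - int c - int d1) \<and>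
         int h - (int n - int c - int d1) < int d1 + int d2 - int t2"
proof -
  define w where "w = rshift h s"
  have sB: "s \<in> B n c d1" and wB: "w \<in> B n c d2" using assms unfolding w_def by auto
  have bs: "length s = n" "n div 2 \<le> c" "1 \<le> d1" "d1 \<le> n - c" "d1 \<le> n div 2"
    using B_basic[OF sB] by auto
  have bw: "length w = n" "1 \<le> d2" "d2 \<le> n - c" "d2 \<le> n div 2"
    using B_basic[OF wB] by auto
  have ar: "int d1 \<le> int c" "int d2 \<le> int c" "int n \<le> 2 * int c + 1" "1 \<le> int d1" "1 \<le> int d2"
    "1 \<le> int h" "int h \<le> int n - 1"
    using bs bw assms by linarith+
  define F where "F = cyc s"
  define U1 where "U1 = (\<lambda>m. s ! nat m)"
  define U2 where "U2 = (\<lambda>m. w ! nat m)"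
  have Fw: "\<And>j. cyc w j = F (j - int h)" unfolding F_def w_def using cyc_rshift[OF bs(1) assms(4,5)] by simp
  have HA: "\<And>j. - int t1 \<le> j \<Longrightarrow> j \<le> int c + int d1 - 2 \<Longrightarrow> F j = U1 (j mod int d1)"
    using run(1)[OF sB] assms(3) unfolding F_def U1_def by simp
  have BA: "F (int c - 1) \<noteq> F (int c + int d1 - 1)" using run(2)[OF sB] unfolding F_def .
  have HW: "\<And>j. - int t2 \<le> j \<Longrightarrow> j \<le> int c + int d2 - 2 \<Longrightarrow> cyc w j = U2 (j mod int d2)"
    using run(1)[OF wB] assms(7) unfolding w_def U2_def by simp
  have BW: "cyc w (int c - 1) \<noteq> cyc w (int c + int d2 - 1)" using run(2)[OF wB] .
  have P1: "\<And>g. 0 < g \<Longrightarrow> g < int d1 \<Longrightarrow> g dvd int d1 \<Longrightarrow> \<not> (\<forall>m. 0 \<le> m \<and> m < int d1 \<longrightarrow> U1 m = U1 (m mod g))"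
    using prim[OF sB] unfolding U1_def by blast
  have P2: "\<And>g. 0 < g \<Longrightarrow> g < int d2 \<Longrightarrow> g dvd int d2 \<Longrightarrow> \<not> (\<forall>m. 0 \<le> m \<and> m < int d2 \<longrightarrow> U2 m = U2 (m mod g))"
    using prim[OF wB] unfolding U2_def by blast
  have key: "\<sigma> = 0" if sk: "\<sigma> = k * int n - int h"
    and ov: "min (int c + int d1 - 2) (\<sigma> + int c + int d2 - 2) - max (- int t1) (\<sigma> - int t2) \<ge> int d1 + int d2 - 2"
    for \<sigma> k
  proof -
    have FF: "F j = cyc w (j - \<sigma>)" for j
      using Fw[of "j - \<sigma>"] cyc_per_k[OF bs(1), of "j - k * int n" k] sk unfolding F_def by simp
    have HB: "\<And>j. \<sigma> - int t2 \<le> j \<Longrightarrow> j \<le> \<sigma> + int c + int d2 - 2 \<Longrightarrow> F j = U2 ((j - \<sigma>) mod int d2)"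
      using HW FF by simp
    have f1: "F (\<sigma> + int c - 1) = cyc w (int c - 1)" using FF[of "\<sigma> + int c - 1"] by simp
    have e2: "\<sigma> + int c + int d2 - 1 - \<sigma> = int c + int d2 - 1" by simp
    have f2: "F (\<sigma> + int c + int d2 - 1) = cyc w (int c + int d2 - 1)"
      using FF[of "\<sigma> + int c + int d2 - 1"] unfolding e2 .
    have BB: "F (\<sigma> + int c - 1) \<noteq> F (\<sigma> + int c + int d2 - 1)" using BW unfolding f1 f2 .
    show ?thesis
      by (rule sep[OF _ _ HA HB BA BB P1 P2 ov]) (use ar in auto)
  qed
  show ?thesis
  proof
    show "int t1 \<le> int h - (int n - int c - int d1)"
    proof (rule ccontr)
      assume "\<not> ?thesis"
      then have "- int h = 0"
        using ar by (intro key[of "- int h" 0] minmax) linarith+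
      then show False using ar by simp
    qed
    show "int h - (int n - int c - int d1) < int d1 + int d2 - int t2"
    proof (rule ccontr)
      assume "\<not> ?thesis"
      then have "int n - int h = 0"
        using ar by (intro key[of "int n - int h" 1] minmax) linarith+
      then show False using ar by simp
    qed
  qed
qed

end
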